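(* Let $\mathcal{T}$ be an $l$-eligible microdata table and run the algorithm described in the context (with arbitrary tie-breaking). Suppose the algorithm does not terminate at the end of Phase One. Then $h(\ddot{R}) = h(\dot{R})$, where $\dot{R}$ is $R$ at the end of Phase One and $\ddot{R}$ is $R$ at the end of Phase Two.
   Context: A microdata table $\mathcal{T}$ is a multiset of $n$ tuples with values on $d$ quasi-identifier (QI) attributes and one sensitive attribute (SA). For a multiset $Q$ and SA value $v$, $h(Q,v)$ is the number of tuples in $Q$ with SA value $v$, $h(Q)=\max_v h(Q,v)$, pillars of $Q$ are the $v$ with $h(Q,v)=h(Q)$; $Q$ is $l$-eligible if $|Q|\ge l\cdot h(Q)$. Let $Q_1,\dots,Q_s$ be the maximal classes of tuples of $\mathcal{T}$ with identical values on all QI attributes; the algorithm only moves tuples from these groups into a set $R$ (initially empty). Phase One: for each $i$, while $Q_i$ is not $l$-eligible, move a tuple of a pillar of $Q_i$ to $R$; call the result $\dot{Q}_i,\dot{R}$; if $R$ is $l$-eligible, terminate. Phase Two terminology (w.r.t. current state): a group $Q$ is thin if $|Q|=l\cdot h(Q)$ and fat if $|Q|\ge l\cdot h(Q)+1$; $Q$ is conflicting if some pillar of $Q$ is a pillar of $R$ (such pillars are its conflicting pillars); $Q$ is dead if thin and conflicting, alive otherwise; an SA value $v$ is alive if some alive group $Q$ has $h(Q,v)>0$. Phase Two iterates: if no SA value is alive, Phase Two ends (go to Phase Three). Otherwise pick an alive SA value $v$ minimizing $h(R,v)$ and an alive group $Q$ with $h(Q,v)>0$ (ties arbitrary); if $Q$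 is fat move one tuple with SA value $v$ from $Q$ to $R$; if $Q$ is thin move one tuple of each pillar of $Q$ to $R$. If $R$ is now $l$-eligible, the algorithm terminates (ending Phase Two). $\ddot{Q}_i,\ddot{R}$ denote the state when Phase Two ends. *)

theory Defs
  imports Main "HOL-Library.Multiset"
begin

text \<open>Tuples are pairs (QI value, SA value); a table / group / R is a multiset of tuples.\<close>

definition h :: "('q \<times> 's) multiset \<Rightarrow> 's \<Rightarrow> nat" where
  "h Q v = count (image_mset snd Q) v"

definition hmax :: "('q \<times> 's) multiset \<Rightarrow> nat" where
  "hmax Q = Max (insert 0 ((\<lambda>v. h Q v) ` set_mset (image_mset snd Q)))"

definition pillar :: "('q \<times> 's) multiset \<Rightarrow> 's \<Rightarrow> bool" where
  "pillar Q v \<longleftrightarrow> h Q v = hmax Q"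

definition eligible :: "nat \<Rightarrow> ('q \<times> 's) multiset \<Rightarrow> bool" where
  "eligible l Q \<longleftrightarrow> size Q \<ge> l * hmax Q"

definition group :: "('q \<times> 's) multiset \<Rightarrow> 'q \<Rightarrow> ('q \<times> 's) multiset" where
  "group T q = filter_mset (\<lambda>t. fst t = q) T"

text \<open>Phase One on a single group: p1 l Q Q' D means the while loop started on Q
  ends with Q' after moving the tuples D to R.\<close>
inductive p1 :: "nat \<Rightarrow> ('q \<times> 's) multiset \<Rightarrow> ('q \<times> 's) multiset \<Rightarrow> ('q \<times> 's) multiset \<Rightarrow> bool"
  for l where
  stop: "eligible l Q \<Longrightarrow> p1 l Q Q {#}"
| move: "\<not> eligible l Q \<Longrightarrow> t \<in># Q \<Longrightarrow> pillar Q (snd t) \<Longrightarrow>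
         p1 l (Q - {#t#}) Q' D \<Longrightarrow> p1 l Q Q' (D + {#t#})"

definition thin :: "nat \<Rightarrow> ('q \<times> 's) multiset \<Rightarrow> bool" where
  "thin l Q \<longleftrightarrow> size Q = l * hmax Q"

definition fat :: "nat \<Rightarrow> ('q \<times> 's) multiset \<Rightarrow> bool" where
  "fat l Q \<longleftrightarrow> size Q \<ge> l * hmax Q + 1"

definition conflicting :: "('q \<times> 's) multiset \<Rightarrow> ('q \<times> 's) multiset \<Rightarrow> bool" where
  "conflicting Q R \<longleftrightarrow> (\<exists>v. pillar Q v \<and> pillar R v)"

definition dead :: "nat \<Rightarrow> ('q \<times> 's) multiset \<Rightarrow> ('q \<times> 's) multiset \<Rightarrow> bool" where
  "dead l Q R \<longleftrightarrow> thin l Q \<and> conflicting Q R"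

definition alive_val :: "nat \<Rightarrow> 'q set \<Rightarrow> ('q \<Rightarrow> ('q \<times> 's) multiset) \<Rightarrow> ('q \<times> 's) multiset \<Rightarrow> 's \<Rightarrow> bool" where
  "alive_val l I G R v \<longleftrightarrow> (\<exists>q\<in>I. \<not> dead l (G q) R \<and> h (G q) v > 0)"

text \<open>One iteration of Phase Two (only taken when the algorithm has not terminated,
  i.e. R is not l-eligible, and some SA value is alive).\<close>
definition p2_step :: "nat \<Rightarrow> 'q set \<Rightarrow>
    ('q \<Rightarrow> ('q \<times> 's) multiset) \<times> ('q \<times> 's) multiset \<Rightarrow>
    ('q \<Rightarrow> ('q \<times> 's) multiset) \<times> ('q \<times> 's) multiset \<Rightarrow> bool" where
  "p2_step l I S S' \<longleftrightarrow>
     (let G = fst S; R = snd S in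
      \<not> eligible l R \<and>
      (\<exists>v q. alive_val l I G R v \<and> (\<forall>w. alive_val l I G R w \<longrightarrow> h R v \<le> h R w) \<and>
             q \<in> I \<and> \<not> dead l (G q) R \<and> h (G q) v > 0 \<and>
             ((fat l (G q) \<and> (\<exists>t. t \<in># G q \<and> snd t = v \<and>
                  S' = (G(q := G q - {#t#}), R + {#t#}))) \<or>
              (thin l (G q) \<and> (\<exists>M. M \<subseteq># G q \<and>
                  image_mset snd M = mset_set {w. pillar (G q) w} \<and>
                  S' = (G(q := G q - M), R + M))))))"

end

theory Submission
  imports Defs
begin

lemma size_eq_sum: "size N = sum (count N) (set_mset N)"
  by (simp add: size_multiset_overloaded_eq)

lemma h_le_hmax: "h Q v \<le> hmax Q"
proof (cases "v \<in> set_mset (image_mset snd Q)")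
  case True
  then show ?thesis unfolding hmax_def by (intro Max_ge) auto
next
  case False
  then have "h Q v = 0" unfolding h_def by (simp add: count_eq_zero_iff)
  then show ?thesis by simp
qed

lemma hmax_witness: "hmax Q > 0 \<Longrightarrow> \<exists>v. h Q v = hmax Q"
proof -
  assume a: "hmax Q > 0"
  let ?S = "insert 0 ((\<lambda>v. h Q v) ` set_mset (image_mset snd Q))"
  have "Max ?S \<in> ?S" by (intro Max_in) auto
  then show ?thesis using a unfolding hmax_def by auto
qed

lemma hmax_eqI: "(\<And>w. h Q w \<le> m) \<Longrightarrow> h Q v = m \<Longrightarrow> hmax Q = m"
proof -
  assume a: "\<And>w. h Q w \<le> m" and b: "h Q v = m"
  have "hmax Q \<le> m"
  proof (cases "hmax Q = 0")
    case False then obtain w where "h Q w = hmax Q" using hmax_witness by blast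
    then show ?thesis using a[of w] by simp
  qed simp
  moreover have "m \<le> hmax Q" using h_le_hmax[of Q v] b by simp
  ultimately show ?thesis by simp
qed

lemma hmax_pres:
  assumes "\<And>w. h R' w \<le> hmax R" "\<And>w. h R w \<le> h R' w"
  shows "hmax R' = hmax R"
proof (cases "hmax R = 0")
  case True
  then have "h R' w \<le> 0" for w using assms(1) by simp
  then have "h R' x = 0" for x by simp
  then have "hmax R' = 0" using hmax_eqI[of R' 0 undefined] by simp
  then show ?thesis using True by simp
next
  case False
  then obtain v where "h R v = hmax R" using hmax_witness by blast
  then have "h R' v = hmax R" using assms(1,2)[of v] by simp
  then show ?thesis using hmax_eqI[of R' "hmax R"] assms(1) by blast
qed

lemma h_add: "h (R + M) w = h R w + count (image_mset snd M) w"
  by (simp add: h_def)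

lemma sum_h_le_size:
  assumes "finite S" shows "(\<Sum>w\<in>S. h N w) \<le> size N"
proof -
  let ?N = "image_mset snd N"
  have "(\<Sum>w\<in>S. h N w) = (\<Sum>w\<in>S \<inter> set_mset ?N. h N w)"
    using assms by (intro sum.mono_neutral_right) (auto simp: h_def count_eq_zero_iff)
  also have "\<dots> = (\<Sum>w\<in>S \<inter> set_mset ?N. count ?N w)" by (simp add: h_def)
  also have "\<dots> \<le> (\<Sum>w\<in>set_mset ?N. count ?N w)"
    by (intro sum_mono2) auto
  also have "\<dots> = size N" using size_eq_sum[of ?N] by simp
  finally show ?thesis .
qed

lemma size_le_card_hmax:
  "size Q \<le> card (set_mset (image_mset snd Q)) * hmax Q"
proof -
  let ?N = "image_mset snd Q"
  have "size Q = (\<Sum>w\<in>set_mset ?N. h Q w)" using size_eq_sum[of ?N] by (simp add: h_def)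
  also have "\<dots> \<le> (\<Sum>w\<in>set_mset ?N. hmax Q)" by (intro sum_mono h_le_hmax)
  also have "\<dots> = card (set_mset ?N) * hmax Q" by simp
  finally show ?thesis .
qed

lemma step_pres:
  assumes "p2_step l I (G, R) (G', R')"
  shows "hmax R' = hmax R"
proof -
  from assms have ne: "\<not> eligible l R" and
    ex: "\<exists>v q. alive_val l I G R v \<and> (\<forall>w. alive_val l I G R w \<longrightarrow> h R v \<le> h R w) \<and>
             q \<in> I \<and> \<not> dead l (G q) R \<and> h (G q) v > 0 \<and>
             ((fat l (G q) \<and> (\<exists>t. t \<in># G q \<and> snd t = v \<and>
                  (G', R') = (G(q := G q - {#t#}), R + {#t#}))) \<or>
              (thin l (G q) \<and> (\<exists>M. M \<subseteq># G q \<and>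
                  image_mset snd M = mset_set {w. pillar (G q) w} \<and>
                  (G', R') = (G(q := G q - M), R + M))))"
    unfolding p2_step_def Let_def by auto
  then obtain v q where al: "alive_val l I G R v" and mn: "\<forall>w. alive_val l I G R w \<longrightarrow> h R v \<le> h R w"
    and qI: "q \<in> I" and nd: "\<not> dead l (G q) R" and pos: "h (G q) v > 0"
    and cs: "(fat l (G q) \<and> (\<exists>t. t \<in># G q \<and> snd t = v \<and>
                  (G', R') = (G(q := G q - {#t#}), R + {#t#}))) \<or>
              (thin l (G q) \<and> (\<exists>M. M \<subseteq># G q \<and>
                  image_mset snd M = mset_set {w. pillar (G q) w} \<and>
                  (G', R') = (G(q := G q - M), R + M)))" by blast
  let ?Q = "G q"
  from cs show ?thesis
  proof
    assume "fat l ?Q \<and> (\<exists>t. t \<in># ?Q \<and> snd t = v \<and> (G', R') = (G(q := ?Q - {#t#}), R + {#t#}))"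
    then obtain t where fat: "fat l ?Q" and tv: "snd t = v" and RR: "R' = R + {#t#}" by auto
    have lt: "h R v < hmax R"
    proof (rule ccontr)
      assume "\<not> h R v < hmax R"
      then have eq: "h R v = hmax R" using h_le_hmax[of R v] by simp
      let ?S = "set_mset (image_mset snd ?Q)"
      have allp: "h R w = hmax R" if "w \<in> ?S" for w
      proof -
        have "h ?Q w > 0" using that by (simp add: h_def)
        then have "alive_val l I G R w" using qI nd unfolding alive_val_def by blast
        then show ?thesis using mn eq h_le_hmax[of R w] by force
      qed
      have hQ: "hmax ?Q > 0" using pos h_le_hmax[of ?Q v] by simp
      have "l * hmax ?Q < card ?S * hmax ?Q"
        using fat size_le_card_hmax[of ?Q] unfolding fat_def by linarith
      then have cl: "l < card ?S" using hQ by (meson mult_less_cancel2)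
      have "(\<Sum>w\<in>?S. h R w) \<le> size R" by (intro sum_h_le_size) auto
      moreover have "(\<Sum>w\<in>?S. h R w) = card ?S * hmax R" using allp by simp
      ultimately have "card ?S * hmax R \<le> size R" by simp
      moreover have "l * hmax R \<le> card ?S * hmax R" using cl by simp
      ultimately have "eligible l R" unfolding eligible_def by linarith
      then show False using ne by simp
    qed
    show ?thesis
    proof (rule hmax_pres)
      fix w show "h R' w \<le> hmax R"
        using lt h_le_hmax[of R w] tv unfolding RR h_add by auto
    next
      fix w show "h R w \<le> h R' w" unfolding RR h_add by simp
    qed
  next
    assume "thin l ?Q \<and> (\<exists>M. M \<subseteq># ?Q \<and> image_mset snd M = mset_set {w. pillar ?Q w} \<and>
                  (G', R') = (G(q := ?Q - M), R + M))"
    then obtain M where thin: "thin l ?Q" and Mi: "image_mset snd M = mset_set {w. pillar ?Q w}"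
      and RR: "R' = R + M" by auto
    have nc: "\<not> conflicting ?Q R" using nd thin unfolding dead_def by simp
    show ?thesis
    proof (rule hmax_pres)
      fix w show "h R' w \<le> hmax R"
      proof (cases "pillar ?Q w")
        case True
        then have "\<not> pillar R w" using nc unfolding conflicting_def by blast
        then have "h R w < hmax R" using h_le_hmax[of R w] unfolding pillar_def by simp
        moreover have "count (mset_set {w. pillar ?Q w}) w \<le> 1" by (simp add: count_mset_set')
        ultimately show ?thesis unfolding RR h_add Mi by simp
      next
        case False
        then show ?thesis using h_le_hmax[of R w] unfolding RR h_add Mi by simp
      qed
    next
      fix w show "h R w \<le> h R' w" unfolding RR h_add by simp
    qed
  qed
qed

lemma star_pres:
  assumes "(p2_step l I)\<^sup>*\<^sup>* S S'"
  shows "hmax (snd S') = hmax (snd S)"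
  using assms
proof induction
  case base then show ?case by simp
next
  case (step y z)
  obtain G R where y: "y = (G, R)" by (cases y)
  obtain G' R' where z: "z = (G', R')" by (cases z)
  show ?case using step step_pres[of l I G R G' R'] y z by simp
qed

theorem lemma5:
  fixes T :: "('q \<times> 's) multiset" and l :: nat
    and G1 G2 :: "'q \<Rightarrow> ('q \<times> 's) multiset" and D :: "'q \<Rightarrow> ('q \<times> 's) multiset"
    and R1 R2 :: "('q \<times> 's) multiset"
  assumes elig: "eligible l T"
    and phase1: "\<forall>q \<in> fst ` set_mset T. p1 l (group T q) (G1 q) (D q)"
    and R1: "R1 = (\<Sum>q \<in> fst ` set_mset T. D q)"
    and noterm1: "\<not> eligible l R1"
    and phase2: "(p2_step l (fst ` set_mset T))\<^sup>*\<^sup>* (G1, R1) (G2, R2)"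
    and end2: "eligible l R2 \<or> (\<forall>v. \<not> alive_val l (fst ` set_mset T) G2 R2 v)"
  shows "hmax R2 = hmax R1"
  using star_pres[OF phase2] by simp

end
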